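(* Consider the sequences $(x_k),(y_k),(\nu_k),(\lambda_k)$ generated by Algorithm 2 (described in the context). Then for all $k\ge1$, $$\|y_k-y_{k-1}\|\le\frac{1}{1-\hat\sigma}\big\|\lambda_k\big(F(y_{k-1})+\nu_{k-1}\big)+y_{k-1}-x_{k-1}\big\|.$$
   Context: Setting: $\mathcal H$ real Hilbert space; $C\subseteq\mathcal H$ nonempty closed convex; $N_C(x)=\{\nu:\langle\nu,y-x\rangle\le0\ \forall y\in C\}$ if $x\in C$, $N_C(x)=\emptyset$ otherwise. $F:C\to\mathcal H$ is monotone, continuously differentiable, and $\|F'(x)-F'(y)\|\le L\|x-y\|$ for all $x,y\in C$, with $L>0$; the set of $x$ with $0\in F(x)+N_C(x)$ is nonempty. For $y\in C$, $F_y(x):=F(y)+F'(y)(x-y)$. Parameters: $0\le\hat\sigma<1/2$; $0<\theta<(1-\hat\sigma)(1-2\hat\sigma)$; $\hat\theta:=\theta\big(\frac{\hat\sigma}{1-\hat\sigma}+\frac{\theta}{(1-\hat\sigma)^2}\big)$; $\eta>2\hat\theta/L$; $\tau:=\dfrac{2(\theta-\hat\theta)}{2\theta+\frac{\eta L}{2}+\sqrt{(2\theta+\frac{\eta L}{2})^2-4\theta(\theta-\hat\theta)}}$. Algorithm 2: input $x_0\in C$, $y_0:=x_0$, $\nu_0:=0$, $\lambda_1>0$ with $\lambda_1^2\|F(y_0)\|\le2\theta/L$. For $k=1,2,\dots$: if $F(y_{k-1})+\nu_{k-1}=0$, stop and return $y_{k-1}$. If $\frac{\lambda_kL}{2}\|\lambda_k(F(y_{k-1})+\nu_{k-1})+y_{k-1}-x_{k-1}\|\le\hat\theta$,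 set $y_k=y_{k-1}$, $\nu_k=\nu_{k-1}$; otherwise find any $(y_k,\nu_k)$ with $\nu_k\in N_C(y_k)$ and $\|\lambda_k(F_{y_{k-1}}(y_k)+\nu_k)+y_k-x_{k-1}\|\le\hat\sigma\|y_k-y_{k-1}\|$. Then, if $\lambda_k\|y_k-x_{k-1}\|\ge\eta$, set $x_k=x_{k-1}-\tau\lambda_k(F(y_k)+\nu_k)$ and $\lambda_{k+1}=(1-\tau)\lambda_k$; else set $x_k=x_{k-1}$ and $\lambda_{k+1}=\lambda_k/(1-\tau)$. Standing assumption: the algorithm never stops at the first test, i.e. $F(y_{k-1})+\nu_{k-1}\neq0$ for all $k$. *)

theory Defs
  imports "HOL-Analysis.Analysis"
begin

definition normal_cone :: "'a::real_inner set \<Rightarrow> 'a \<Rightarrow> 'a set" where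
  "normal_cone C x = (if x \<in> C then {v. \<forall>y\<in>C. inner v (y - x) \<le> 0} else {})"

definition linearization :: "('a::real_normed_vector \<Rightarrow> 'a) \<Rightarrow> ('a \<Rightarrow> 'a \<Rightarrow>\<^sub>L 'a) \<Rightarrow> 'a \<Rightarrow> 'a \<Rightarrow> 'a" where
  "linearization F F' y x = F y + blinfun_apply (F' y) (x - y)"

definition hat_theta :: "real \<Rightarrow> real \<Rightarrow> real" where
  "hat_theta sig th = th * (sig / (1 - sig) + th / (1 - sig)\<^sup>2)"

definition tau_param :: "real \<Rightarrow> real \<Rightarrow> real \<Rightarrow> real \<Rightarrow> real" where
  "tau_param sig th eta L =
     2 * (th - hat_theta sig th) /
     (2 * th + eta * L / 2 + sqrt ((2 * th + eta * L / 2)\<^sup>2 - 4 * th * (th - hat_theta sig th)))"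

text \<open>The sequences x, y, nu, lam are generated by Algorithm 2 (step k+1 uses index k for k-1).\<close>
definition alg2_run ::
  "'a::real_inner set \<Rightarrow> ('a \<Rightarrow> 'a) \<Rightarrow> ('a \<Rightarrow> 'a \<Rightarrow>\<^sub>L 'a) \<Rightarrow> real \<Rightarrow> real \<Rightarrow> real \<Rightarrow> real
    \<Rightarrow> (nat \<Rightarrow> 'a) \<Rightarrow> (nat \<Rightarrow> 'a) \<Rightarrow> (nat \<Rightarrow> 'a) \<Rightarrow> (nat \<Rightarrow> real) \<Rightarrow> bool" where
  "alg2_run C F F' L sig th eta x y nu lam \<longleftrightarrow>
     x 0 \<in> C \<and> y 0 = x 0 \<and> nu 0 = 0 \<and> lam 1 > 0 \<and>
     (lam 1)\<^sup>2 * norm (F (y 0)) \<le> 2 * th / L \<and>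
     (\<forall>k. F (y k) + nu k \<noteq> 0) \<and>
     (\<forall>k. (if lam (Suc k) * L / 2 * norm (lam (Suc k) *\<^sub>R (F (y k) + nu k) + y k - x k)
               \<le> hat_theta sig th
           then y (Suc k) = y k \<and> nu (Suc k) = nu k
           else nu (Suc k) \<in> normal_cone C (y (Suc k)) \<and>
                norm (lam (Suc k) *\<^sub>R (linearization F F' (y k) (y (Suc k)) + nu (Suc k))
                      + y (Suc k) - x k) \<le> sig * norm (y (Suc k) - y k))) \<and>
     (\<forall>k. (if lam (Suc k) * norm (y (Suc k) - x k) \<ge> eta
           then x (Suc k) = x k - (tau_param sig th eta L * lam (Suc k)) *\<^sub>R (F (y (Suc k)) + nu (Suc k))
                \<and> lam (Suc (Suc k)) = (1 - tau_param sig th eta L) * lam (Suc k)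
           else x (Suc k) = x k
                \<and> lam (Suc (Suc k)) = lam (Suc k) / (1 - tau_param sig th eta L)))"

end

theory Submission
  imports Defs
begin

lemma psd:
  fixes F :: "'a::real_inner \<Rightarrow> 'a"
  assumes cv: "convex C" and yC: "y \<in> C" and zC: "z \<in> C"
    and mono: "\<forall>u\<in>C. \<forall>v\<in>C. inner (F u - F v) (u - v) \<ge> 0"
    and der: "(F has_derivative D) (at y within C)"
  shows "inner (D (z - y)) (z - y) \<ge> 0"
proof (rule ccontr)
  define h where "h = z - y"
  assume "\<not> ?thesis"
  hence neg: "inner (D h) h < 0" by (simp add: h_def)
  have lin: "((\<lambda>t::real. y + t *\<^sub>R h) has_derivative (\<lambda>s. s *\<^sub>R h)) (at 0 within {0..1})"
    by (auto intro!: derivative_eq_intros)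
  have sub: "(\<lambda>t::real. y + t *\<^sub>R h) ` {0..1} \<subseteq> C"
  proof
    fix w assume "w \<in> (\<lambda>t::real. y + t *\<^sub>R h) ` {0..1}"
    then obtain t where t: "0 \<le> t" "t \<le> 1" "w = y + t *\<^sub>R h" by auto
    have "(1 - t) *\<^sub>R y + t *\<^sub>R z \<in> C" using cv yC zC t by (simp add: convexD_alt)
    moreover have "(1 - t) *\<^sub>R y + t *\<^sub>R z = w" using t by (simp add: h_def algebra_simps)
    ultimately show "w \<in> C" by simp
  qed
  have derF: "(F has_derivative D) (at ((\<lambda>t::real. y + t *\<^sub>R h) 0) within (\<lambda>t::real. y + t *\<^sub>R h) ` {0..1})"
    using has_derivative_subset[OF der sub] by simp
  have comp: "((F \<circ> (\<lambda>t::real. y + t *\<^sub>R h)) has_derivative (D \<circ> (\<lambda>s. s *\<^sub>R h))) (at 0 within {0..1})"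
    by (rule diff_chain_within[OF lin derF])
  have bl: "bounded_linear D" using der has_derivative_bounded_linear by blast
  have g: "((\<lambda>t. inner (F (y + t *\<^sub>R h)) h) has_derivative (\<lambda>s. inner (D (s *\<^sub>R h)) h)) (at 0 within {0..1})"
    using bounded_linear.has_derivative[OF bounded_linear_inner_left comp] by (simp add: o_def)
  have "(\<lambda>s. inner (D (s *\<^sub>R h)) h) = (\<lambda>s. inner (D h) h * s)"
    using bl by (simp add: linear_simps mult.commute)
  hence g2: "((\<lambda>t. inner (F (y + t *\<^sub>R h)) h) has_real_derivative inner (D h) h) (at 0 within {0..1})"
    using g by (simp add: has_field_derivative_def)
  from has_real_derivative_neg_dec_right[OF g2 neg] obtain d where d: "d > 0"
    and dd: "\<And>t. t > 0 \<Longrightarrow> 0 + t \<in> {0..1} \<Longrightarrow> t < d \<Longrightarrow> inner (F (y + (0 + t) *\<^sub>R h)) h < inner (F (y + 0 *\<^sub>R h)) h"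
    by blast
  define t where "t = min (d/2) 1"
  have t: "t > 0" "t \<le> 1" "t < d" using d by (auto simp: t_def)
  have lt: "inner (F (y + t *\<^sub>R h) - F y) h < 0" using dd[of t] t by (simp add: inner_diff_left)
  have wC: "y + t *\<^sub>R h \<in> C" using sub t by (force simp: image_subset_iff)
  have "inner (F (y + t *\<^sub>R h) - F y) ((y + t *\<^sub>R h) - y) \<ge> 0" using mono wC yC by blast
  hence "t * inner (F (y + t *\<^sub>R h) - F y) h \<ge> 0" by simp
  hence "inner (F (y + t *\<^sub>R h) - F y) h \<ge> 0" using t by (simp add: zero_le_mult_iff)
  thus False using lt by simp
qed

theorem proposition4p1:
  fixes C :: "'a::{real_inner, complete_space} set"
    and F :: "'a \<Rightarrow> 'a" and F' :: "'a \<Rightarrow> 'a \<Rightarrow>\<^sub>L 'a"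
    and L sig th eta :: real
    and x y nu :: "nat \<Rightarrow> 'a" and lam :: "nat \<Rightarrow> real"
  assumes C_ne: "C \<noteq> {}" and C_closed: "closed C" and C_convex: "convex C"
    and F_mono: "\<forall>u\<in>C. \<forall>v\<in>C. inner (F u - F v) (u - v) \<ge> 0"
    and F_deriv: "\<forall>u\<in>C. (F has_derivative blinfun_apply (F' u)) (at u within C)"
    and F'_cont: "continuous_on C F'"
    and L_pos: "L > 0"
    and F'_lip: "\<forall>u\<in>C. \<forall>v\<in>C. norm (F' u - F' v) \<le> L * norm (u - v)"
    and sol_ne: "\<exists>u\<in>C. - F u \<in> normal_cone C u"
    and sig: "0 \<le> sig" "sig < 1/2"
    and th: "0 < th" "th < (1 - sig) * (1 - 2 * sig)"
    and eta: "eta > 2 * hat_theta sig th / L"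
    and run: "alg2_run C F F' L sig th eta x y nu lam"
  shows "\<forall>k. norm (y (Suc k) - y k)
           \<le> 1 / (1 - sig) * norm (lam (Suc k) *\<^sub>R (F (y k) + nu k) + y k - x k)"
proof -
  define tau where "tau = tau_param sig th eta L"
  have hth: "hat_theta sig th < th"
  proof -
    have s1: "1 - sig > 0" using sig by simp
    have "sig / (1 - sig) + th / (1 - sig)\<^sup>2 = (sig * (1 - sig) + th) / (1 - sig)\<^sup>2"
    proof -
      have nz: "1 - sig \<noteq> 0" using s1 by simp
      have "sig / (1 - sig) = sig * (1 - sig) / (1 - sig)\<^sup>2" using nz by (simp add: power2_eq_square)
      thus ?thesis by (simp add: add_divide_distrib)
    qed
    also have "\<dots> < 1" using th s1 by (simp add: power2_eq_square algebra_simps)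
    finally show ?thesis using th unfolding hat_theta_def by simp
  qed
  have hth0: "hat_theta sig th \<ge> 0" using sig th unfolding hat_theta_def by simp
  have etaL: "eta * L / 2 > 0"
  proof -
    have "eta > 0" using eta hth0 L_pos
      by (smt (verit) divide_nonneg_pos)
    thus ?thesis using L_pos by simp
  qed
  have tau1: "1 - tau > 0"
  proof -
    define D where "D = 2 * th + eta * L / 2 + sqrt ((2 * th + eta * L / 2)\<^sup>2 - 4 * th * (th - hat_theta sig th))"
    have a1: "4 * th * (th - hat_theta sig th) \<le> (2 * th)\<^sup>2"
      using th hth0 by (simp add: power2_eq_square algebra_simps)
    have a2: "(2 * th)\<^sup>2 \<le> (2 * th + eta * L / 2)\<^sup>2"
      using th etaL by (intro power_mono) auto
    define S where "S = sqrt ((2 * th + eta * L / 2)\<^sup>2 - 4 * th * (th - hat_theta sig th))"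
    have "S \<ge> 0"
      using a1 a2 unfolding S_def by simp
    hence D1: "D > 2 * (th - hat_theta sig th)" using etaL hth0 th unfolding D_def S_def[symmetric]
      by (smt (verit))
    have D2: "D > 0" using D1 hth by (smt (verit))
    note D = D1 D2
    have "tau = 2 * (th - hat_theta sig th) / D" unfolding tau_def tau_param_def D_def by simp
    also have "\<dots> < 1" using D by simp
    finally show ?thesis by simp
  qed
  note R = run[unfolded alg2_run_def]
  have inv: "y k \<in> C \<and> nu k \<in> normal_cone C (y k) \<and> lam (Suc k) > 0" for k
  proof (induction k)
    case 0
    then show ?case using R by (auto simp: normal_cone_def)
  next
    case (Suc k)
    have A: "y (Suc k) \<in> C \<and> nu (Suc k) \<in> normal_cone C (y (Suc k))"
      using R[THEN conjunct2, THEN conjunct2, THEN conjunct2, THEN conjunct2, THEN conjunct2, THEN conjunct2, THEN conjunct1, rule_format, of k] Suc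
      by (auto split: if_splits simp: normal_cone_def)
    have B: "lam (Suc (Suc k)) > 0"
      using R[THEN conjunct2, THEN conjunct2, THEN conjunct2, THEN conjunct2, THEN conjunct2, THEN conjunct2, THEN conjunct2, rule_format, of k] Suc tau1
      unfolding tau_def by (auto split: if_splits)
    show ?case using A B by simp
  qed
  show ?thesis
  proof
    fix k
    let ?r = "lam (Suc k) *\<^sub>R (F (y k) + nu k) + y k - x k"
    show "norm (y (Suc k) - y k) \<le> 1 / (1 - sig) * norm ?r"
    proof (cases "lam (Suc k) * L / 2 * norm ?r \<le> hat_theta sig th")
      case True
      hence "y (Suc k) = y k"
        using R[THEN conjunct2, THEN conjunct2, THEN conjunct2, THEN conjunct2, THEN conjunct2, THEN conjunct2, THEN conjunct1, rule_format, of k]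
        by simp
      thus ?thesis using sig by simp
    next
      case False
      have st: "nu (Suc k) \<in> normal_cone C (y (Suc k))"
        "norm (lam (Suc k) *\<^sub>R (linearization F F' (y k) (y (Suc k)) + nu (Suc k)) + y (Suc k) - x k) \<le> sig * norm (y (Suc k) - y k)"
        using R[THEN conjunct2, THEN conjunct2, THEN conjunct2, THEN conjunct2, THEN conjunct2, THEN conjunct2, THEN conjunct1, rule_format, of k] False
        by auto
      define d where "d = y (Suc k) - y k"
      define l where "l = lam (Suc k)"
      define e where "e = lam (Suc k) *\<^sub>R (linearization F F' (y k) (y (Suc k)) + nu (Suc k)) + y (Suc k) - x k"
      have l0: "l > 0" using inv[of k] by (simp add: l_def)
      have yC: "y k \<in> C" and nuk: "nu k \<in> normal_cone C (y k)" using inv[of k] by auto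
      have y1C: "y (Suc k) \<in> C" using st(1) by (auto simp: normal_cone_def split: if_splits)
      have p1: "inner (blinfun_apply (F' (y k)) d) d \<ge> 0"
        unfolding d_def using psd[OF C_convex yC y1C F_mono] F_deriv yC by blast
      have p2: "inner (nu (Suc k) - nu k) d \<ge> 0"
      proof -
        have "inner (nu (Suc k)) (y k - y (Suc k)) \<le> 0" using st(1) yC by (auto simp: normal_cone_def split: if_splits)
        moreover have "inner (nu k) (y (Suc k) - y k) \<le> 0" using nuk y1C by (auto simp: normal_cone_def split: if_splits)
        ultimately show ?thesis unfolding d_def
          by (smt (verit) inner_diff_left inner_diff_right)
      qed
      have ed: "e - ?r = l *\<^sub>R blinfun_apply (F' (y k)) d + l *\<^sub>R (nu (Suc k) - nu k) + d"
        unfolding e_def l_def d_def linearization_def by (simp add: algebra_simps)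
      have "inner (e - ?r) d = l * inner (blinfun_apply (F' (y k)) d) d + l * inner (nu (Suc k) - nu k) d + inner d d"
        unfolding ed by (simp add: inner_add_left)
      also have "\<dots> \<ge> inner d d" using p1 p2 l0 by simp
      finally have i1: "norm d ^ 2 \<le> inner (e - ?r) d" by (simp add: power2_norm_eq_inner)
      have "inner (e - ?r) d \<le> norm (e - ?r) * norm d" by (rule norm_cauchy_schwarz)
      also have "\<dots> \<le> (norm e + norm ?r) * norm d"
        by (intro mult_right_mono norm_triangle_ineq4) simp
      also have "\<dots> \<le> (sig * norm d + norm ?r) * norm d"
        using st(2) by (intro mult_right_mono) (auto simp: e_def d_def)
      finally have "norm d * norm d \<le> (sig * norm d + norm ?r) * norm d" using i1 by (simp add: power2_eq_square)
      hence "(1 - sig) * norm d * norm d \<le> norm ?r * norm d" by (simp add: algebra_simps)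
      hence "(1 - sig) * norm d \<le> norm ?r" 
        by (cases "norm d = 0") (auto simp: mult_le_cancel_right)
      thus ?thesis using sig unfolding d_def by (simp add: field_simps)
    qed
  qed
qed

end
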